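(* Let $n\ge 3$ and consider the cycle graph on nodes $1,\dots,n$ with arbitrary measurements $\widetilde{R}_{12},\dots,\widetilde{R}_{n-1,n},\widetilde{R}_{n1}\in\mathrm{SO}(3)$. Then the point $R^\ast=(R_1^\ast,\dots,R_n^\ast)$ with $R_1^\ast=I_3$ and $$R_i^\ast=\Big(\prod_{s=1}^{i-1}\widetilde{R}_{s,s+1}\Big)^{\top}E_0^{\,i-1},\qquad i\in\{2,\dots,n\},$$ (product from left to right, i.e. $\widetilde{R}_{12}\cdots\widetilde{R}_{i-1,i}$) is a global minimizer of $f$ over $\mathrm{SO}(3)^n$.
   Context: Cycle-graph rotation averaging setup. Let $n\ge 3$. The cycle graph has nodes $1,\dots,n$ and edges $\{i,i+1\}$ for $i=1,\dots,n-1$ together with $\{n,1\}$; write $i\sim j$ if $\{i,j\}$ is an edge. Each edge carries a measured rotation $\widetilde{R}_{ij}\in\mathrm{SO}(3)$, with the convention $\widetilde{R}_{ji}=\widetilde{R}_{ij}^\top$. Define the symmetric $3n\times 3n$ block matrix $\widetilde{R}$ whose $(i,j)$ $3\times3$ block is $I_3$ if $i=j$, $\widetilde{R}_{ij}$ if $i\sim j$, and $0$ otherwise. For $R=(R_1,\dots,R_n)\in\mathrm{SO}(3)^n$, write $R=[R_1^\top\ \cdots\ R_n^\top]^\top\in\mathbb{R}^{3n\times 3}$ and define $f(R):=-\operatorname{Tr}(R^\top\widetilde{R}R)$; the rotation averaging problem is to minimize $f$ over $\mathrm{SO}(3)^n$. The cycle error is $E:=\widetilde{R}_{12}\widetilde{R}_{23}\cdots\widetilde{R}_{n-1,n}\widetilde{R}_{n1}\in\mathrm{SO}(3)$.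 Write $E=\exp(\gamma[\hat n]_\times)$ with unit axis $\hat n$ and angle $\gamma=\angle(E)\in[-\pi,\pi]$. For $k\in\{0,\dots,n-1\}$, $E_k:=\exp\big((\gamma/n-2k\pi/n)[\hat n]_\times\big)$; in particular $E_0=\exp((\gamma/n)[\hat n]_\times)$. *)

theory Defs
  imports "HOL-Analysis.Analysis"
begin

type_synonym mat3 = "real^3^3"

text \<open>SO(3): orthogonal 3x3 matrices with determinant 1.\<close>
definition SO3 :: "mat3 set" where
  "SO3 = {A. orthogonal_matrix A \<and> det A = 1}"

text \<open>Matrix powers and the matrix exponential (power series).\<close>
fun mpow :: "mat3 \<Rightarrow> nat \<Rightarrow> mat3" where
  "mpow A 0 = mat 1"
| "mpow A (Suc k) = A ** mpow A k"

definition mexp :: "mat3 \<Rightarrow> mat3" where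
  "mexp A = (\<Sum>k. (1 / fact k) *\<^sub>R mpow A k)"

text \<open>Skew-symmetric cross-product matrix [v]_x.\<close>
definition skew :: "real^3 \<Rightarrow> mat3" where
  "skew v = vector [vector [0, - (v$3), v$2],
                    vector [v$3, 0, - (v$1)],
                    vector [- (v$2), v$1, 0]]"

text \<open>Cycle graph on nodes 1..n: edges {i,i+1} (i<n) and {n,1}.\<close>
definition cyc_adj :: "nat \<Rightarrow> nat \<Rightarrow> nat \<Rightarrow> bool" where
  "cyc_adj n i j \<longleftrightarrow> i \<in> {1..n} \<and> j \<in> {1..n} \<and>
     ((j = i + 1) \<or> (i = j + 1) \<or> (i = n \<and> j = 1) \<or> (i = 1 \<and> j = n))"

text \<open>Measurements: Rt i = R~_{i,i+1} for 1 \<le> i < n, and Rt n = R~_{n,1}.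
  The measurement on an ordered pair (i,j), with R~_{ji} = R~_{ij}^T.\<close>
definition meas :: "nat \<Rightarrow> (nat \<Rightarrow> mat3) \<Rightarrow> nat \<Rightarrow> nat \<Rightarrow> mat3" where
  "meas n Rt i j =
     (if j = i + 1 then Rt i
      else if i = j + 1 then transpose (Rt j)
      else if i = n \<and> j = 1 then Rt n
      else transpose (Rt n))"

text \<open>(i,j) 3x3 block of the 3n x 3n data matrix R~.\<close>
definition block :: "nat \<Rightarrow> (nat \<Rightarrow> mat3) \<Rightarrow> nat \<Rightarrow> nat \<Rightarrow> mat3" where
  "block n Rt i j = (if i = j then mat 1 else if cyc_adj n i j then meas n Rt i j else 0)"

text \<open>f(R) = - Tr(R^T R~ R), written blockwise.\<close>
definition cost :: "nat \<Rightarrow> (nat \<Rightarrow> mat3) \<Rightarrow> (nat \<Rightarrow> mat3) \<Rightarrow> real" where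
  "cost n Rt R = - (\<Sum>i\<in>{1..n}. \<Sum>j\<in>{1..n}.
       trace (transpose (R i) ** block n Rt i j ** R j))"

text \<open>Ordered product Rt 1 ** Rt 2 ** ... ** Rt k.\<close>
fun mprod :: "(nat \<Rightarrow> mat3) \<Rightarrow> nat \<Rightarrow> mat3" where
  "mprod Rt 0 = mat 1"
| "mprod Rt (Suc k) = mprod Rt k ** Rt (Suc k)"

text \<open>Cycle error E = R~_12 R~_23 ... R~_{n-1,n} R~_{n1}.\<close>
definition cycle_err :: "nat \<Rightarrow> (nat \<Rightarrow> mat3) \<Rightarrow> mat3" where
  "cycle_err n Rt = mprod Rt n"

end

theory Submission
  imports Defs
begin

lemmas m3 = vec_eq_iff forall_3 sum_3 matrix_matrix_mult_def transpose_def mat_def trace_def inner_vec_def matrix_vector_mult_def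

lemma skew_nth: "skew v $ 1 $ 1 = 0" "skew v $ 1 $ 2 = - v$3" "skew v $ 1 $ 3 = v$2"
  "skew v $ 2 $ 1 = v$3" "skew v $ 2 $ 2 = 0" "skew v $ 2 $ 3 = - v$1"
  "skew v $ 3 $ 1 = - v$2" "skew v $ 3 $ 2 = v$1" "skew v $ 3 $ 3 = 0"
  by (simp_all add: skew_def)

lemma skew_cube: "skew v ** skew v ** skew v = - ((v \<bullet> v) *\<^sub>R skew v)"
  by (simp add: m3 skew_nth algebra_simps power2_eq_square) 

lemma skew_tr: "transpose (skew v) = - skew v"
  by (simp add: m3 skew_nth)
lemma skew_trace: "trace (skew v) = 0" by (simp add: m3 skew_nth)
lemma skew_trace2: "trace (skew v ** skew v) = - 2 * (v \<bullet> v)" by (simp add: m3 skew_nth algebra_simps)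

lemma scl_l: "(c *\<^sub>R A) ** (B::mat3) = c *\<^sub>R (A ** B)"
  by (simp add: m3 algebra_simps sum_distrib_left)
lemma scl_r: "(A::mat3) ** (c *\<^sub>R B) = c *\<^sub>R (A ** B)"
  by (simp add: m3 algebra_simps sum_distrib_left)
lemma neg_l: "(- A) ** (B::mat3) = - (A ** B)"
  by (simp add: m3 algebra_simps)
lemma neg_r: "(A::mat3) ** (- B) = - (A ** B)"
  by (simp add: m3 algebra_simps)
lemma add_l: "(A + B) ** (C::mat3) = A ** C + B ** C"
  by (simp add: m3 algebra_simps)
lemma add_r: "(A::mat3) ** (B + C) = A ** B + A ** C"
  by (simp add: m3 algebra_simps)
lemma diff_l: "(A - B) ** (C::mat3) = A ** C - B ** C"
  by (simp add: m3 algebra_simps)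
lemma diff_r: "(A::mat3) ** (B - C) = A ** B - A ** C"
  by (simp add: m3 algebra_simps)
lemmas mring = add_l add_r diff_l diff_r scl_l scl_r neg_l neg_r matrix_mul_lid matrix_mul_rid

definition rod :: "mat3 \<Rightarrow> real \<Rightarrow> mat3" where
  "rod K t = mat 1 + sin t *\<^sub>R K + (1 - cos t) *\<^sub>R (K ** K)"

lemma mpow_K:
  assumes K3: "K ** K ** K = - K"
  shows "mpow K k = (if k=0 then 1 else 0) *\<^sub>R mat 1 + (fact k * sin_coeff k) *\<^sub>R K
      + (fact k * ((if k=0 then 1 else 0) - cos_coeff k)) *\<^sub>R (K**K)"
proof (induction k)
  case 0
  then show ?case by (simp add: sin_coeff_def cos_coeff_def)
next
  case (Suc k)
  have e1: "fact (Suc k) * sin_coeff (Suc k) = (if k=0 then 1 else 0) - fact k * ((if k=0 then 1 else 0) - cos_coeff k)"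
    by (simp add: sin_coeff_Suc)
  have e2: "fact (Suc k) * ((if Suc k=0 then 1 else 0) - cos_coeff (Suc k)) = (fact k * sin_coeff k :: real)"
    by (simp add: cos_coeff_Suc)
  have "mpow K (Suc k) = K ** mpow K k" by simp
  also have "\<dots> = (if k=0 then 1 else 0) *\<^sub>R K + (fact k * sin_coeff k) *\<^sub>R (K ** K)
      + (fact k * ((if k=0 then 1 else 0) - cos_coeff k)) *\<^sub>R (K ** K ** K)"
    by (simp add: Suc mring matrix_mul_assoc)
  also have "\<dots> = ((if k=0 then 1 else 0) - fact k * ((if k=0 then 1 else 0) - cos_coeff k)) *\<^sub>R K
      + (fact k * sin_coeff k) *\<^sub>R (K ** K)"
    by (simp add: K3 algebra_simps)
  also have "\<dots> = (if Suc k=0 then 1 else 0) *\<^sub>R mat 1 + (fact (Suc k) * sin_coeff (Suc k)) *\<^sub>R K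
      + (fact (Suc k) * ((if Suc k=0 then 1 else 0) - cos_coeff (Suc k))) *\<^sub>R (K**K)"
    by (simp only: e1 e2) simp
  finally show ?case .
qed

lemma mpow_scale: "mpow (t *\<^sub>R K) k = t^k *\<^sub>R mpow K k"
  by (induction k) (simp_all add: mring mult.commute)

lemma mexp_rod:
  assumes K3: "K ** K ** K = - K"
  shows "mexp (t *\<^sub>R K) = rod K t"
proof -
  have trm: "(1 / fact k) *\<^sub>R mpow (t *\<^sub>R K) k =
     (if k = 0 then 1 else 0) *\<^sub>R mat 1 + (sin_coeff k * t^k) *\<^sub>R K
     + ((if k=0 then 1 else 0) - cos_coeff k * t^k) *\<^sub>R (K**K)" for k
    by (cases "k = 0") (simp_all add: mpow_scale mpow_K[OF K3] scaleR_add_right algebra_simps cos_coeff_def)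
  have s1: "(\<lambda>k. (if k = 0 then 1 else 0 :: real)) sums 1"
    using sums_single[of 0 "\<lambda>_. 1::real"] by simp
  have s2: "(\<lambda>k. sin_coeff k * t^k) sums sin t" using sin_converges[of t] by simp
  have s3: "(\<lambda>k. (if k=0 then 1 else 0) - cos_coeff k * t^k) sums (1 - cos t)"
    using sums_diff[OF s1 cos_converges[of t]] by simp
  have "(\<lambda>k. (1 / fact k) *\<^sub>R mpow (t *\<^sub>R K) k) sums ((1::real) *\<^sub>R mat 1 + sin t *\<^sub>R K + (1 - cos t) *\<^sub>R (K ** K))"
    unfolding trm
    by (intro sums_add sums_scaleR_left s1 s2 s3)
  then have "(\<lambda>k. (1 / fact k) *\<^sub>R mpow (t *\<^sub>R K) k) sums rod K t" by (simp add: rod_def)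
  then show ?thesis unfolding mexp_def by (rule sums_unique[symmetric])
qed

lemma tr_add: "transpose ((A::mat3) + B) = transpose A + transpose B" by (simp add: m3)
lemma tr_scl: "transpose (c *\<^sub>R (A::mat3)) = c *\<^sub>R transpose A" by (simp add: m3)
lemma tr_neg: "transpose (- (A::mat3)) = - transpose A" by (simp add: m3)
lemma trace_scl: "trace (c *\<^sub>R (A::mat3)) = c * trace A" by (simp add: m3 algebra_simps)
lemma trace_neg: "trace (- (A::mat3)) = - trace A" by (simp add: m3 algebra_simps)
lemma trace_I3: "trace (mat 1 :: mat3) = 3" by (simp add: m3)
lemma tr_KK: "transpose ((A::mat3) ** A) = transpose A ** transpose A" by (simp add: matrix_transpose_mul)

locale skewK =
  fixes K :: mat3
  assumes K3: "K ** K ** K = - K"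
    and KT: "transpose K = - K"
    and trK: "trace K = 0"
    and trK2: "trace (K ** K) = -2"
begin

definition lc :: "real \<Rightarrow> real \<Rightarrow> real \<Rightarrow> mat3" where
  "lc a b c = a *\<^sub>R mat 1 + b *\<^sub>R K + c *\<^sub>R (K ** K)"

lemma K4: "K ** K ** K ** K = - (K ** K)"
  by (simp add: K3 mring)

lemma lc_mul: "lc a b c ** lc a' b' c' = lc (a*a') (a*b' + b*a' - b*c' - c*b') (a*c' + c*a' + b*b' - c*c')"
  unfolding lc_def
  by (simp add: mring matrix_mul_assoc K3 K4 algebra_simps)

lemma lc_tr: "transpose (lc a b c) = lc a (-b) c"
  unfolding lc_def by (simp add: tr_add tr_scl tr_KK KT mring)

lemma lc_trace: "trace (lc a b c) = 3*a - 2*c"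
  unfolding lc_def by (simp add: trace_add trace_scl trace_I3 trK trK2)

lemma rod_lc: "rod K t = lc 1 (sin t) (1 - cos t)"
  unfolding rod_def lc_def by simp

lemma rod_add: "rod K a ** rod K b = rod K (a + b)"
  unfolding rod_lc lc_mul by (simp add: sin_add cos_add algebra_simps)

lemma rod_tr: "transpose (rod K t) = rod K (-t)"
  unfolding rod_lc lc_tr by simp

lemma rod_0: "rod K 0 = mat 1"
  unfolding rod_def by simp

lemma rod_trace: "trace (rod K t) = 1 + 2 * cos t"
  unfolding rod_lc lc_trace by simp

lemma rod_orth: "orthogonal_matrix (rod K t)"
  unfolding orthogonal_matrix_def rod_tr rod_add by (simp add: rod_0)

lemma rod_SO3: "rod K t \<in> SO3"
proof -
  have "rod K t = rod K (t/2) ** rod K (t/2)" by (simp add: rod_add)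
  then have "det (rod K t) = det (rod K (t/2)) * det (rod K (t/2))" by (simp add: det_mul)
  then have "det (rod K t) \<ge> 0" by simp
  moreover have "det (rod K t) = 1 \<or> det (rod K t) = -1" by (rule det_orthogonal_matrix[OF rod_orth])
  ultimately show ?thesis using rod_orth unfolding SO3_def by auto
qed

lemma mpow_rod: "mpow (rod K t) k = rod K (real k * t)"
  by (induction k) (simp_all add: rod_0 rod_add algebra_simps)

end

lemma skewK_skew: assumes "norm v = 1" shows "skewK (skew v)"
proof -
  have "v \<bullet> v = 1" using assms by (simp add: dot_square_norm)
  then show ?thesis
    by unfold_locales (simp_all add: skew_cube skew_tr skew_trace skew_trace2)
qed

lemma CH3:
  fixes A :: mat3
  shows "A ** (A ** A - trace A *\<^sub>R A + ((trace A ^ 2 - trace (A ** A)) / 2) *\<^sub>R mat 1) = det A *\<^sub>R mat 1"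
  by (simp add: m3 det_3 algebra_simps power2_eq_square divide_simps) 

lemma SO3_orth: "A \<in> SO3 \<Longrightarrow> orthogonal_matrix A" by (simp add: SO3_def)
lemma SO3_det: "A \<in> SO3 \<Longrightarrow> det A = 1" by (simp add: SO3_def)
lemma SO3_mul: "A \<in> SO3 \<Longrightarrow> B \<in> SO3 \<Longrightarrow> A ** B \<in> SO3"
  by (simp add: SO3_def orthogonal_matrix_mul det_mul)
lemma SO3_tr: "A \<in> SO3 \<Longrightarrow> transpose A \<in> SO3"
  by (simp add: SO3_def orthogonal_matrix_transpose det_transpose)
lemma SO3_I: "mat 1 \<in> SO3"
  by (simp add: SO3_def orthogonal_matrix_id det_I)
lemma SO3_TA: "A \<in> SO3 \<Longrightarrow> transpose A ** A = mat 1"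
  by (simp add: SO3_def orthogonal_matrix_def)
lemma SO3_AT: "A \<in> SO3 \<Longrightarrow> A ** transpose A = mat 1"
  by (simp add: SO3_def orthogonal_matrix_def)

lemma SO3_norm: assumes "A \<in> SO3" shows "norm (A *v x) = norm x"
proof -
  have "orthogonal_transformation ((*v) A)"
    using assms by (simp add: orthogonal_transformation_matrix matrix_vector_mul_linear matrix_of_matrix_vector_mul SO3_def)
  then show ?thesis by (rule orthogonal_transformation_norm)
qed

lemma SO3_transpose_poly:
  assumes "A \<in> SO3"
  shows "transpose A = A ** A - trace A *\<^sub>R A + trace A *\<^sub>R mat 1"
proof -
  define s where "s = (trace A ^ 2 - trace (A ** A)) / 2"
  have ch: "A ** (A ** A - trace A *\<^sub>R A + s *\<^sub>R mat 1) = mat 1"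
    using CH3[of A] SO3_det[OF assms] by (simp add: s_def)
  have T: "transpose A = A ** A - trace A *\<^sub>R A + s *\<^sub>R mat 1"
  proof -
    have "transpose A = transpose A ** (A ** (A ** A - trace A *\<^sub>R A + s *\<^sub>R mat 1))"
      by (simp add: ch)
    also have "\<dots> = A ** A - trace A *\<^sub>R A + s *\<^sub>R mat 1"
      by (simp add: matrix_mul_assoc SO3_TA[OF assms])
    finally show ?thesis .
  qed
  have "trace (transpose A) = trace A" by (simp add: m3)
  then have "trace A = trace (A ** A) - trace A * trace A + 3 * s"
    by (simp add: T trace_add trace_sub trace_scl trace_I3)
  then have "s = trace A" by (simp add: s_def power2_eq_square field_simps)
  with T show ?thesis by simp
qed

definition ca :: "mat3 \<Rightarrow> real" where "ca A = (trace A - 1) / 2"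

lemma inner_transpose_mv: "x \<bullet> (transpose A *v x) = x \<bullet> ((A::mat3) *v x)"
  by (simp add: m3 algebra_simps)

lemma trace_le3: assumes "A \<in> SO3" shows "trace A \<le> 3"
proof -
  have "\<bar>A $ i $ i\<bar> \<le> 1" for i
  proof -
    have "\<bar>column i A $ i\<bar> \<le> norm (column i A)" by (rule component_le_norm_cart)
    moreover have "norm (column i A) = 1"
      using SO3_orth[OF assms] by (simp add: orthogonal_matrix_orthonormal_columns)
    ultimately show ?thesis by (simp add: column_def)
  qed
  then have "A$1$1 \<le> 1" "A$2$2 \<le> 1" "A$3$3 \<le> 1" by (auto simp: abs_le_iff)
  then show ?thesis by (simp add: trace_def sum_3)
qed

lemma SO3_M:
  assumes "A \<in> SO3"
  defines "M \<equiv> A ** A + (1 - trace A) *\<^sub>R A + mat 1"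
  shows "M ** M = (3 - trace A) *\<^sub>R M" and "transpose M = M"
    and "M = A + transpose A - (trace A - 1) *\<^sub>R mat 1"
    and "(A - mat 1) ** M = 0"
proof -
  have T: "transpose A = A ** A - trace A *\<^sub>R A + trace A *\<^sub>R mat 1"
    by (rule SO3_transpose_poly[OF assms(1)])
  show M2: "M = A + transpose A - (trace A - 1) *\<^sub>R mat 1"
    unfolding M_def T by (simp add: algebra_simps)
  show "transpose M = M"
    unfolding M2 by (simp add: m3)
  have AT: "A ** transpose A = mat 1" by (rule SO3_AT[OF assms(1)])
  have A3: "A ** A ** A = mat 1 + trace A *\<^sub>R (A ** A) - trace A *\<^sub>R A"
  proof -
    have "mat 1 = A ** (A ** A - trace A *\<^sub>R A + trace A *\<^sub>R mat 1)" using AT T by simp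
    then show ?thesis by (simp add: mring matrix_mul_assoc algebra_simps)
  qed
  have AM: "A ** M = M"
    unfolding M_def by (simp add: mring matrix_mul_assoc A3 algebra_simps)
  show "(A - mat 1) ** M = 0" by (simp add: mring AM)
  have MA: "M ** A = A ** M" unfolding M_def by (simp add: mring matrix_mul_assoc)
  have "M ** M = M ** (A ** A) + (1 - trace A) *\<^sub>R (M ** A) + M"
    by (subst (2) M_def) (simp add: mring)
  also have "\<dots> = (3 - trace A) *\<^sub>R M"
  proof -
    have "M ** (A ** A) = M" by (simp add: matrix_mul_assoc MA AM)
    moreover have "M ** A = M" by (simp add: MA AM)
    ultimately show ?thesis by (simp add: vec_eq_iff algebra_simps)
  qed
  finally show "M ** M = (3 - trace A) *\<^sub>R M" .
qed

lemma inner_mv_tr: "x \<bullet> ((M::mat3) *v y) = (transpose M *v x) \<bullet> y"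
  by (simp add: m3 algebra_simps)

lemma vMv_gen: "v \<bullet> ((A + transpose A - c *\<^sub>R mat 1) *v v) = 2 * (v \<bullet> ((A::mat3) *v v)) - c * (v \<bullet> v)"
  by (simp add: m3 algebra_simps)

lemma SO3_lowb:
  assumes A: "A \<in> SO3" and v: "norm v = 1"
  shows "ca A \<le> v \<bullet> (A *v v)"
proof -
  define M where "M = A ** A + (1 - trace A) *\<^sub>R A + mat 1"
  note MM = SO3_M[OF A, folded M_def]
  have vv: "v \<bullet> v = 1" using v by (simp add: dot_square_norm)
  have vMv: "v \<bullet> (M *v v) = 2 * (v \<bullet> (A *v v)) - (trace A - 1)"
    unfolding MM(3) vMv_gen vv by simp
  have key: "(3 - trace A) * (v \<bullet> (M *v v)) = (M *v v) \<bullet> (M *v v)"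
  proof -
    have "(3 - trace A) * (v \<bullet> (M *v v)) = v \<bullet> (((3 - trace A) *\<^sub>R M) *v v)"
      by (simp add: m3 algebra_simps)
    also have "\<dots> = v \<bullet> (M *v (M *v v))" by (simp add: MM(1)[symmetric] matrix_vector_mul_assoc)
    also have "\<dots> = (M *v v) \<bullet> (M *v v)" by (simp add: inner_mv_tr MM(2))
    finally show ?thesis .
  qed
  have "v \<bullet> (M *v v) \<ge> 0"
  proof (cases "trace A = 3")
    case True
    then have "(M *v v) \<bullet> (M *v v) = 0" using key by simp
    then have "M *v v = 0" by simp
    then show ?thesis by simp
  next
    case False
    then have "3 - trace A > 0" using trace_le3[OF A] by simp
    moreover have "(3 - trace A) * (v \<bullet> (M *v v)) \<ge> 0" using key by simp
    ultimately show ?thesis by (simp add: zero_le_mult_iff)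
  qed
  then show ?thesis using vMv by (simp add: ca_def)
qed

lemma SO3_att:
  assumes A: "A \<in> SO3"
  shows "\<exists>v. norm v = 1 \<and> v \<bullet> (A *v v) = ca A"
proof -
  define M where "M = A ** A + (1 - trace A) *\<^sub>R A + mat 1"
  note MM = SO3_M[OF A, folded M_def]
  have "det M = 0"
  proof (rule ccontr)
    assume "det M \<noteq> 0"
    then have "inj ((*v) M)"
      using det_nz_iff_inj[OF matrix_vector_mul_linear[of M]] by (simp add: matrix_of_matrix_vector_mul)
    then have "surj ((*v) M)" by (rule eucl.linear_inj_imp_surj[OF matrix_vector_mul_linear])
    have "(A - mat 1) *v y = 0" for y
    proof -
      obtain x where "y = M *v x" using \<open>surj ((*v) M)\<close> by (metis surjD)
      then have "(A - mat 1) *v y = ((A - mat 1) ** M) *v x" by (simp add: matrix_vector_mul_assoc)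
      also have "\<dots> = 0" by (simp add: MM(4))
      finally show ?thesis .
    qed
    then have "A - mat 1 = 0" by (simp add: matrix_eq)
    then have AI: "A = mat 1" by simp
    then have "M = 0" unfolding M_def by (simp add: m3 trace_I3)
    then have "det M = 0" using det_0 by (simp add: m3 det_3)
    with \<open>det M \<noteq> 0\<close> show False by simp
  qed
  then have "\<not> inj ((*v) M)"
    using det_nz_iff_inj[OF matrix_vector_mul_linear[of M]] by (simp add: matrix_of_matrix_vector_mul)
  then obtain x y where xy: "x \<noteq> y" "M *v x = M *v y" unfolding inj_def by blast
  define w where "w = x - y"
  have w0: "w \<noteq> 0" and Mw: "M *v w = 0" using xy by (simp_all add: w_def matrix_vector_mult_diff_distrib)
  define v where "v = (1 / norm w) *\<^sub>R w"
  have nv: "norm v = 1" using w0 by (simp add: v_def)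
  have "M *v v = 0" by (simp add: v_def matrix_vector_mult_scaleR Mw)
  then have "v \<bullet> (M *v v) = 0" by simp
  moreover have vv: "v \<bullet> v = 1" using nv by (simp add: dot_square_norm)
  moreover have "v \<bullet> (M *v v) = 2 * (v \<bullet> (A *v v)) - (trace A - 1)"
    unfolding MM(3) vMv_gen vv by simp
  ultimately have "v \<bullet> (A *v v) = ca A" by (simp add: ca_def)
  with nv show ?thesis by blast
qed

lemma SO3_ca_range:
  assumes A: "A \<in> SO3"
  shows "-1 \<le> ca A" "ca A \<le> 1"
proof -
  obtain v where v: "norm v = 1" "v \<bullet> (A *v v) = ca A" using SO3_att[OF A] by blast
  have "\<bar>v \<bullet> (A *v v)\<bar> \<le> norm v * norm (A *v v)" by (rule Cauchy_Schwarz_ineq2)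
  then show "-1 \<le> ca A" using v SO3_norm[OF A, of v] by simp
  show "ca A \<le> 1" using trace_le3[OF A] by (simp add: ca_def)
qed

lemma unit_inner_bounds:
  fixes x y :: "real^3"
  assumes "norm x = 1" "norm y = 1"
  shows "-1 \<le> x \<bullet> y" "x \<bullet> y \<le> 1"
proof -
  have "\<bar>x \<bullet> y\<bar> \<le> norm x * norm y" by (rule Cauchy_Schwarz_ineq2)
  then show "-1 \<le> x \<bullet> y" "x \<bullet> y \<le> 1" using assms by auto
qed

lemma sph_tri:
  fixes x y z :: "real^3"
  assumes nx: "norm x = 1" and ny: "norm y = 1" and nz: "norm z = 1"
  shows "arccos (x \<bullet> z) \<le> arccos (x \<bullet> y) + arccos (y \<bullet> z)"
proof -
  define a where "a = x \<bullet> y"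
  define b where "b = y \<bullet> z"
  have ab: "-1 \<le> a" "a \<le> 1" "-1 \<le> b" "b \<le> 1"
    using unit_inner_bounds[OF nx ny] unit_inner_bounds[OF ny nz] by (simp_all add: a_def b_def)
  have xz: "-1 \<le> x \<bullet> z" "x \<bullet> z \<le> 1" using unit_inner_bounds[OF nx nz] by simp_all
  define S where "S = arccos a + arccos b"
  have S0: "0 \<le> S" using arccos_lbound ab by (simp add: S_def)
  show ?thesis
  proof (cases "S \<le> pi")
    case False
    then show ?thesis using arccos_bounded[OF xz] by (simp add: S_def a_def b_def)
  next
    case True
    have xx: "x \<bullet> x = 1" and yy: "y \<bullet> y = 1" and zz: "z \<bullet> z = 1"
      using nx ny nz by (simp_all add: dot_square_norm)
    define x' where "x' = x - a *\<^sub>R y"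
    define z' where "z' = z - b *\<^sub>R y"
    have e1: "x \<bullet> z = x' \<bullet> z' + a * b"
      unfolding x'_def z'_def by (simp add: inner_diff_left inner_diff_right yy a_def b_def inner_commute algebra_simps)
    have e2: "x' \<bullet> x' = 1 - a^2"
      unfolding x'_def by (simp add: inner_diff_left inner_diff_right yy xx a_def inner_commute algebra_simps power2_eq_square)
    have e3: "z' \<bullet> z' = 1 - b^2"
      unfolding z'_def by (simp add: inner_diff_left inner_diff_right yy zz b_def inner_commute algebra_simps power2_eq_square)
    have "\<bar>x' \<bullet> z'\<bar> \<le> norm x' * norm z'" by (rule Cauchy_Schwarz_ineq2)
    moreover have "norm x' = sqrt (1 - a^2)" "norm z' = sqrt (1 - b^2)"
      using e2 e3 by (simp_all add: norm_eq_sqrt_inner)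
    ultimately have "x' \<bullet> z' \<ge> - (sqrt (1 - a^2) * sqrt (1 - b^2))" by (simp add: abs_le_iff)
    moreover have "cos S = a * b - sqrt (1 - a^2) * sqrt (1 - b^2)"
      unfolding S_def cos_add using ab by (simp add: cos_arccos sin_arccos)
    ultimately have cS: "cos S \<le> x \<bullet> z" using e1 by linarith
    have "arccos (x \<bullet> z) \<le> arccos (cos S)"
      by (rule arccos_le_arccos) (use cS xz in auto)
    also have "\<dots> = S" using S0 True by (simp add: arccos_cos)
    finally show ?thesis by (simp add: S_def a_def b_def)
  qed
qed

definition ang :: "mat3 \<Rightarrow> real" where "ang A = arccos (ca A)"

lemma ang_tri:
  assumes A: "A \<in> SO3" and B: "B \<in> SO3"
  shows "ang (A ** B) \<le> ang A + ang B"
proof -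
  have AB: "A ** B \<in> SO3" using A B by (rule SO3_mul)
  obtain v where v: "norm v = 1" "v \<bullet> ((A ** B) *v v) = ca (A ** B)" using SO3_att[OF AB] by blast
  define y where "y = B *v v"
  have ny: "norm y = 1" using SO3_norm[OF B] v by (simp add: y_def)
  have nz: "norm (A *v y) = 1" using SO3_norm[OF A] ny by simp
  have "ang (A ** B) = arccos (v \<bullet> (A *v y))" using v by (simp add: ang_def y_def matrix_vector_mul_assoc)
  also have "\<dots> \<le> arccos (v \<bullet> y) + arccos (y \<bullet> (A *v y))" by (rule sph_tri[OF v(1) ny nz])
  also have "arccos (v \<bullet> y) \<le> ang B"
    unfolding ang_def y_def
    by (rule arccos_le_arccos) (use SO3_ca_range[OF B] SO3_lowb[OF B v(1)] unit_inner_bounds[OF v(1) ny[unfolded y_def]] in auto)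
  also have "arccos (y \<bullet> (A *v y)) \<le> ang A"
    unfolding ang_def
    by (rule arccos_le_arccos) (use SO3_ca_range[OF A] SO3_lowb[OF A ny] unit_inner_bounds[OF ny nz] in auto)
  finally show ?thesis by simp
qed

lemma ang_range: "A \<in> SO3 \<Longrightarrow> 0 \<le> ang A \<and> ang A \<le> pi"
  unfolding ang_def using SO3_ca_range arccos_bounded by blast

lemma trace_ang: "A \<in> SO3 \<Longrightarrow> trace A = 1 + 2 * cos (ang A)"
  unfolding ang_def using SO3_ca_range[of A] by (simp add: cos_arccos ca_def field_simps)

lemma cos_lower_quad: fixes x :: real assumes "x \<ge> 0" shows "1 - x^2 / 2 \<le> cos x"
proof -
  have "cos x = 1 - 2 * sin (x/2) ^ 2" using cos_double_sin[of "x/2"] by simp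
  moreover have "0 \<le> sin (x/2) \<or> sin (x/2) < 0" by linarith
  moreover have "sin (x/2) \<le> x/2" using assms by (intro sin_x_le_x) simp
  moreover have "- sin (x/2) \<le> x/2"
  proof -
    have "-1 \<le> sin (x/2)" by simp
    show ?thesis
    proof (cases "x/2 \<le> pi")
      case True
      have "0 \<le> sin (x/2)" using True assms by (intro sin_ge_zero) auto
      then show ?thesis using assms by simp
    next
      case False then show ?thesis using \<open>-1 \<le> sin (x/2)\<close> pi_gt3 by linarith
    qed
  qed
  ultimately have "\<bar>sin (x/2)\<bar> \<le> x/2" by linarith
  then have "\<bar>sin (x/2)\<bar> ^ 2 \<le> (x/2)^2" by (intro power_mono) auto
  then have "sin (x/2) ^ 2 \<le> (x/2)^2" by simp
  then show ?thesis using \<open>cos x = _\<close> by (simp add: power_divide)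
qed

lemma cos_tangent:
  assumes m0: "0 \<le> m" and m1: "m \<le> pi/2" and x0: "0 \<le> x" and x1: "x \<le> pi - m"
  shows "cos x \<le> cos m - sin m * (x - m)"
proof (cases x m rule: linorder_cases)
  case less
  obtain z where z: "x < z" "z < m" "cos m - cos x = (m - x) * (- sin z)"
    using MVT2[OF less, of cos "\<lambda>t. - sin t"] by (auto intro: derivative_eq_intros)
  have "sin z \<le> sin m" using z m1 x0 by (intro sin_monotone_2pi_le) auto
  then have "(m - x) * sin z \<le> (m - x) * sin m" using less by (intro mult_left_mono) auto
  then show ?thesis using z by (simp add: algebra_simps)
next
  case equal then show ?thesis by simp
next
  case greater
  obtain z where z: "m < z" "z < x" "cos x - cos m = (x - m) * (- sin z)"
    using MVT2[OF greater, of cos "\<lambda>t. - sin t"] by (auto intro: derivative_eq_intros)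
  have "sin m \<le> sin z"
  proof (cases "z \<le> pi/2")
    case True then show ?thesis using z m0 by (intro sin_monotone_2pi_le) auto
  next
    case False
    have "sin m \<le> sin (pi - z)" using z x1 False m0 by (intro sin_monotone_2pi_le) auto
    then show ?thesis by simp
  qed
  then have "(x - m) * sin m \<le> (x - m) * sin z" using greater by (intro mult_left_mono) auto
  then show ?thesis using z by (simp add: algebra_simps)
qed

lemma cos_pi_n:
  fixes n :: nat assumes "n \<ge> 3"
  shows "real n - 1 \<le> (real n + 1) * cos (pi / real n)"
proof -
  consider "n = 3" | "n = 4" | "n \<ge> 5" using assms by linarith
  then show ?thesis
  proof cases
    case 1 then show ?thesis by (simp add: cos_60)
  next
    case 2
    have "(6/5::real) \<le> sqrt 2" by (rule real_le_rsqrt) (simp add: power2_eq_square)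
    then show ?thesis using 2 by (simp add: cos_45)
  next
    case 3
    have n5: "real n \<ge> 5" using 3 by simp
    have cq: "1 - (pi / real n)^2 / 2 \<le> cos (pi / real n)" by (rule cos_lower_quad) simp
    have "pi^2 < 16"
    proof -
      have "pi * pi < 4 * 4" using pi_less_4 pi_gt_zero by (intro mult_strict_mono) auto
      then show ?thesis by (simp add: power2_eq_square)
    qed
    moreover have "4 * (real n + 1) \<le> real n ^ 2"
    proof -
      have "5 * real n \<le> real n * real n" using n5 by (intro mult_right_mono) auto
      moreover have "4 * (real n + 1) \<le> 5 * real n" using n5 by simp
      ultimately show ?thesis unfolding power2_eq_square by (rule order_trans[rotated])
    qed
    ultimately have h2: "(real n + 1) * (1 - (pi / real n)^2 / 2) \<ge> real n - 1"
    proof -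
      assume a: "pi^2 < 16" "4 * (real n + 1) \<le> real n ^ 2"
      have "(real n + 1) * (pi / real n)^2 / 2 \<le> 2"
      proof -
        have "(real n + 1) * (pi / real n)^2 / 2 = (real n + 1) * pi^2 / (2 * real n ^ 2)"
          by (simp add: power_divide)
        also have "\<dots> \<le> (real n + 1) * 16 / (2 * real n ^ 2)"
          using a n5 by (intro divide_right_mono mult_left_mono) auto
        also have "\<dots> \<le> 2" using a n5 by (simp add: divide_simps)
        finally show ?thesis .
      qed
      then show ?thesis by (simp add: algebra_simps)
    qed
    have "(real n + 1) * (1 - (pi / real n)^2 / 2) \<le> (real n + 1) * cos (pi / real n)"
      using cq by (intro mult_left_mono) auto
    then show ?thesis using h2 by linarith
  qed
qed

lemma cos_sum_bound:
  fixes n :: nat and th :: "nat \<Rightarrow> real" and g :: real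
  assumes n3: "n \<ge> 3" and th: "\<forall>i\<in>{1..n}. 0 \<le> th i \<and> th i \<le> pi"
    and g0: "0 \<le> g" and gpi: "g \<le> pi" and gs: "g \<le> (\<Sum>i=1..n. th i)"
  shows "(\<Sum>i=1..n. cos (th i)) \<le> real n * cos (g / real n)"
proof -
  define m where "m = g / real n"
  have npos: "real n > 0" using n3 by simp
  have m0: "0 \<le> m" using g0 npos by (simp add: m_def)
  have mpn: "m \<le> pi / real n" using gpi npos by (simp add: m_def divide_right_mono)
  have "pi / real n \<le> pi / 3" using n3 by (intro divide_left_mono) auto
  then have m3: "m \<le> pi / 3" using mpn by linarith
  have nm: "real n * m = g" using npos by (simp add: m_def)
  show ?thesis
  proof (cases "\<forall>i\<in>{1..n}. th i \<le> pi - m")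
    case True
    have "(\<Sum>i=1..n. cos (th i)) \<le> (\<Sum>i=1..n. cos m - sin m * (th i - m))"
      using True th m0 m3 by (intro sum_mono cos_tangent) auto
    also have "\<dots> = real n * cos m - sin m * ((\<Sum>i=1..n. th i) - real n * m)"
      by (simp add: sum_subtractf sum_distrib_left[symmetric] algebra_simps)
    also have "\<dots> \<le> real n * cos m"
    proof -
      have "sin m \<ge> 0" using m0 m3 by (intro sin_ge_zero) auto
      moreover have "(\<Sum>i=1..n. th i) - real n * m \<ge> 0" using gs nm by simp
      ultimately show ?thesis by simp
    qed
    finally show ?thesis by (simp add: m_def)
  next
    case False
    then obtain j where j: "j \<in> {1..n}" "th j > pi - m" by auto
    have cj: "cos (th j) \<le> - cos m"
    proof -
      have "cos (th j) \<le> cos (pi - m)" using j th m3 m0 by (intro cos_monotone_0_pi_le) auto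
      then show ?thesis by simp
    qed
    have "(\<Sum>i=1..n. cos (th i)) = cos (th j) + (\<Sum>i\<in>{1..n} - {j}. cos (th i))"
      using j by (simp add: sum.remove)
    also have "(\<Sum>i\<in>{1..n} - {j}. cos (th i)) \<le> (\<Sum>i\<in>{1..n} - {j}. 1)"
      by (intro sum_mono) simp
    also have "(\<Sum>i\<in>{1..n} - {j}. (1::real)) = real n - 1"
      using j by (simp add: card_Diff_singleton of_nat_diff)
    finally have s1: "(\<Sum>i=1..n. cos (th i)) \<le> real n - 1 - cos m" using cj by linarith
    have "cos (pi / real n) \<le> cos m" using m0 mpn npos by (intro cos_monotone_0_pi_le) (auto simp: divide_le_eq) 
    then have "(real n + 1) * cos (pi / real n) \<le> (real n + 1) * cos m" by (intro mult_left_mono) auto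
    then have "real n - 1 \<le> (real n + 1) * cos m" using cos_pi_n[OF n3] by linarith
    then show ?thesis using s1 by (simp add: m_def algebra_simps)
  qed
qed

definition nx :: "nat \<Rightarrow> nat \<Rightarrow> nat" where "nx n i = (if i = n then 1 else Suc i)"
definition pv :: "nat \<Rightarrow> nat \<Rightarrow> nat" where "pv n i = (if i = 1 then n else i - 1)"

lemma trace_transpose: "trace (transpose (A::mat3)) = trace A" by (simp add: m3)
lemma trace_zero: "trace (0::mat3) = 0" by (simp add: m3)
lemma mul_0_l: "(0::mat3) ** A = 0" by (simp add: m3)
lemma mul_0_r: "(A::mat3) ** 0 = 0" by (simp add: m3)

lemma row_sum:
  assumes n3: "n \<ge> 3" and i: "i \<in> {1..n}"
  shows "(\<Sum>j\<in>{1..n}. trace (transpose (R i) ** block n Rt i j ** R j)) =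
     trace (transpose (R i) ** R i) + trace (transpose (R i) ** Rt i ** R (nx n i))
     + trace (transpose (R i) ** transpose (Rt (pv n i)) ** R (pv n i))"
proof -
  let ?g = "\<lambda>j. trace (transpose (R i) ** block n Rt i j ** R j)"
  have S: "{i, nx n i, pv n i} \<subseteq> {1..n}" using i n3 by (auto simp: nx_def pv_def)
  have d: "i \<noteq> nx n i" "i \<noteq> pv n i" "nx n i \<noteq> pv n i" using i n3 by (auto simp: nx_def pv_def)
  have z: "\<forall>j\<in>{1..n} - {i, nx n i, pv n i}. ?g j = 0"
  proof
    fix j assume j: "j \<in> {1..n} - {i, nx n i, pv n i}"
    then have "\<not> cyc_adj n i j" "j \<noteq> i" using i n3 by (auto simp: cyc_adj_def nx_def pv_def split: if_splits)
    then show "?g j = 0" by (simp add: block_def trace_def)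
  qed
  have "(\<Sum>j\<in>{1..n}. ?g j) = (\<Sum>j\<in>{i, nx n i, pv n i}. ?g j)"
    by (rule sum.mono_neutral_right[OF _ S z]) simp
  also have "\<dots> = ?g i + ?g (nx n i) + ?g (pv n i)" using d by (simp add: algebra_simps)
  also have "block n Rt i i = mat 1" by (simp add: block_def)
  also have "block n Rt i (nx n i) = Rt i"
    using i n3 d by (auto simp: block_def cyc_adj_def meas_def nx_def)
  also have "block n Rt i (pv n i) = transpose (Rt (pv n i))"
    using i n3 d by (auto simp: block_def cyc_adj_def meas_def pv_def)
  finally show ?thesis by simp
qed

lemma bij_pv: assumes "n \<ge> 3" shows "bij_betw (pv n) {1..n} {1..n}"
  by (rule bij_betwI[where g = "nx n"]) (use assms in \<open>auto simp: nx_def pv_def\<close>)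

lemma nx_pv: "n \<ge> 3 \<Longrightarrow> i \<in> {1..n} \<Longrightarrow> nx n (pv n i) = i"
  by (auto simp: nx_def pv_def)

lemma cost_formula:
  assumes n3: "n \<ge> 3" and R: "\<forall>i\<in>{1..n}. R i \<in> SO3"
  shows "cost n Rt R = - (3 * real n + 2 * (\<Sum>i=1..n. trace (transpose (R i) ** Rt i ** R (nx n i))))"
proof -
  let ?f = "\<lambda>k. trace (transpose (R k) ** Rt k ** R (nx n k))"
  have third: "(\<Sum>i=1..n. trace (transpose (R i) ** transpose (Rt (pv n i)) ** R (pv n i))) = (\<Sum>i=1..n. ?f i)"
  proof -
    have "(\<Sum>i=1..n. trace (transpose (R i) ** transpose (Rt (pv n i)) ** R (pv n i))) = (\<Sum>i=1..n. ?f (pv n i))"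
    proof (rule sum.cong[OF refl])
      fix i assume i: "i \<in> {1..n}"
      have "trace (transpose (R i) ** transpose (Rt (pv n i)) ** R (pv n i)) =
            trace (transpose (transpose (R i) ** transpose (Rt (pv n i)) ** R (pv n i)))"
        by (simp add: trace_transpose)
      also have "\<dots> = ?f (pv n i)" using nx_pv[OF n3 i] by (simp add: matrix_transpose_mul matrix_mul_assoc)
      finally show "trace (transpose (R i) ** transpose (Rt (pv n i)) ** R (pv n i)) = ?f (pv n i)" .
    qed
    also have "\<dots> = (\<Sum>i=1..n. ?f i)" by (rule sum.reindex_bij_betw[OF bij_pv[OF n3]])
    finally show ?thesis .
  qed
  have first: "(\<Sum>i=1..n. trace (transpose (R i) ** R i)) = 3 * real n"
    using R by (simp add: SO3_TA trace_I3)
  have "cost n Rt R = - (\<Sum>i=1..n. trace (transpose (R i) ** R i) + ?f i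
     + trace (transpose (R i) ** transpose (Rt (pv n i)) ** R (pv n i)))"
    unfolding cost_def by (rule arg_cong[where f=uminus], rule sum.cong[OF refl], rule row_sum[OF n3])
  also have "\<dots> = - (3 * real n + 2 * (\<Sum>i=1..n. ?f i))"
    unfolding sum.distrib first third by simp
  finally show ?thesis .
qed

lemma mprod_SO3: "\<forall>i\<in>{1..n}. Rt i \<in> SO3 \<Longrightarrow> k \<le> n \<Longrightarrow> mprod Rt k \<in> SO3"
  by (induction k) (auto intro: SO3_mul simp: SO3_I)

lemma mul_cancel_r: "B ** transpose B = mat 1 \<Longrightarrow> (A::mat3) ** B ** transpose B = A"
  by (simp add: matrix_mul_assoc[symmetric])

lemma telescope:
  fixes R Rt :: "nat \<Rightarrow> mat3"
  assumes n3: "n \<ge> 3" and R: "\<forall>i\<in>{1..n}. R i \<in> SO3"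
  defines "Q \<equiv> (\<lambda>i. transpose (R i) ** Rt i ** R (nx n i))"
  shows "k \<le> n \<Longrightarrow> mprod Q k = transpose (R 1) ** mprod Rt k ** R (if k = n then 1 else Suc k)"
proof (induction k)
  case 0
  have "R 1 \<in> SO3" using R n3 by auto
  then show ?case using n3 by (simp add: SO3_TA)
next
  case (Suc k)
  have k: "k < n" using Suc.prems by simp
  have RS: "R (Suc k) ** transpose (R (Suc k)) = mat 1" using R k by (intro SO3_AT) auto
  have "mprod Q (Suc k) = transpose (R 1) ** mprod Rt k ** R (Suc k) ** (transpose (R (Suc k)) ** Rt (Suc k) ** R (nx n (Suc k)))"
    using Suc k by (simp add: Q_def)
  also have "\<dots> = transpose (R 1) ** mprod Rt k ** R (Suc k) ** transpose (R (Suc k)) ** Rt (Suc k) ** R (nx n (Suc k))"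
    by (simp add: matrix_mul_assoc)
  also have "\<dots> = transpose (R 1) ** mprod Rt (Suc k) ** R (nx n (Suc k))"
    by (simp add: mul_cancel_r[OF RS] matrix_mul_assoc)
  also have "nx n (Suc k) = (if Suc k = n then 1 else Suc (Suc k))" by (simp add: nx_def)
  finally show ?case .
qed

lemma ang_I: "ang (mat 1) = 0" by (simp add: ang_def ca_def trace_I3)

lemma ang_chain:
  assumes Q: "\<forall>i\<in>{1..n}. Q i \<in> SO3"
  shows "k \<le> n \<Longrightarrow> mprod Q k \<in> SO3 \<and> ang (mprod Q k) \<le> (\<Sum>i=1..k. ang (Q i))"
proof (induction k)
  case 0 then show ?case by (simp add: SO3_I ang_I)
next
  case (Suc k)
  then have IH: "mprod Q k \<in> SO3" "ang (mprod Q k) \<le> (\<Sum>i=1..k. ang (Q i))" by auto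
  have QS: "Q (Suc k) \<in> SO3" using Q Suc.prems by auto
  have "ang (mprod Q (Suc k)) \<le> ang (mprod Q k) + ang (Q (Suc k))"
    using ang_tri[OF IH(1) QS] by simp
  then show ?case using IH QS by (simp add: SO3_mul)
qed

lemma trace_conj: "trace (transpose B ** A ** B) = trace (A::mat3) \<or> \<not> B ** transpose B = mat 1"
proof (cases "B ** transpose B = mat 1")
  case True
  have "trace (transpose B ** A ** B) = trace (A ** B ** transpose B)"
    by (metis matrix_mul_assoc trace_mul_sym)
  also have "\<dots> = trace A" by (simp add: mul_cancel_r[OF True])
  finally show ?thesis by simp
qed simp

lemma upper_bound:
  fixes n :: nat and Rt R :: "nat \<Rightarrow> mat3" and \<gamma> :: real
  assumes n3: "n \<ge> 3" and Rt: "\<forall>i\<in>{1..n}. Rt i \<in> SO3" and R: "\<forall>i\<in>{1..n}. R i \<in> SO3"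
    and g: "\<gamma> \<in> {-pi..pi}" and E: "trace (mprod Rt n) = 1 + 2 * cos \<gamma>"
  shows "(\<Sum>i=1..n. trace (transpose (R i) ** Rt i ** R (nx n i))) \<le> real n * (1 + 2 * cos (\<gamma> / real n))"
proof -
  define Q where "Q = (\<lambda>i. transpose (R i) ** Rt i ** R (nx n i))"
  have QS: "\<forall>i\<in>{1..n}. Q i \<in> SO3"
  proof
    fix i assume i: "i \<in> {1..n}"
    have "nx n i \<in> {1..n}" using i n3 by (auto simp: nx_def)
    then show "Q i \<in> SO3" using i R Rt by (auto simp: Q_def intro!: SO3_mul SO3_tr)
  qed
  have ch: "ang (mprod Q n) \<le> (\<Sum>i=1..n. ang (Q i))" using ang_chain[OF QS, of n] by simp
  have tel: "mprod Q n = transpose (R 1) ** mprod Rt n ** R 1"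
    using telescope[OF n3 R, where Rt=Rt and k=n] by (simp add: Q_def)
  have R1: "R 1 ** transpose (R 1) = mat 1" using R n3 by (intro SO3_AT) auto
  have "trace (mprod Q n) = trace (mprod Rt n)" using trace_conj[of "R 1" "mprod Rt n"] R1 tel by simp
  then have "ca (mprod Q n) = cos \<gamma>" using E by (simp add: ca_def)
  moreover have "\<bar>\<gamma>\<bar> \<le> pi" using g by auto
  ultimately have "ang (mprod Q n) = \<bar>\<gamma>\<bar>" by (simp add: ang_def arccos_cos_eq_abs)
  then have gs: "\<bar>\<gamma>\<bar> \<le> (\<Sum>i=1..n. ang (Q i))" using ch by simp
  have "(\<Sum>i=1..n. cos (ang (Q i))) \<le> real n * cos (\<bar>\<gamma>\<bar> / real n)"
    by (rule cos_sum_bound[OF n3 _ _ _ gs]) (use QS ang_range g in auto)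
  also have "cos (\<bar>\<gamma>\<bar> / real n) = cos (\<gamma> / real n)"
    by (cases "\<gamma> \<ge> 0") (simp_all add: abs_if)
  finally have cs: "(\<Sum>i=1..n. cos (ang (Q i))) \<le> real n * cos (\<gamma> / real n)" .
  have "(\<Sum>i=1..n. trace (Q i)) = (\<Sum>i=1..n. 1 + 2 * cos (ang (Q i)))"
    using QS by (intro sum.cong) (auto simp: trace_ang)
  also have "\<dots> = real n + 2 * (\<Sum>i=1..n. cos (ang (Q i)))" by (simp add: sum.distrib sum_distrib_left)
  finally show ?thesis using cs unfolding Q_def by (simp add: algebra_simps)
qed

theorem theorem2:
  fixes n :: nat and Rt :: "nat \<Rightarrow> mat3" and nhat :: "real^3" and \<gamma> :: real
  assumes "n \<ge> 3"
    and "\<forall>i\<in>{1..n}. Rt i \<in> SO3"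
    and "norm nhat = 1" and "\<gamma> \<in> {-pi..pi}"
    and "cycle_err n Rt = mexp (\<gamma> *\<^sub>R skew nhat)"
  shows "let E0 = mexp ((\<gamma> / real n) *\<^sub>R skew nhat);
             Rstar = (\<lambda>i. transpose (mprod Rt (i - 1)) ** mpow E0 (i - 1))
         in (\<forall>i\<in>{1..n}. Rstar i \<in> SO3) \<and>
            (\<forall>R. (\<forall>i\<in>{1..n}. R i \<in> SO3) \<longrightarrow> cost n Rt Rstar \<le> cost n Rt R)"
proof -
  note n3 = assms(1) and Rt = assms(2)
  interpret K: skewK "skew nhat" using skewK_skew[OF assms(3)] .
  define K where "K = skew nhat"
  define \<alpha> where "\<alpha> = \<gamma> / real n"
  have npos: "real n > 0" using n3 by simp
  have E0: "mexp ((\<gamma> / real n) *\<^sub>R skew nhat) = rod K \<alpha>"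
    using mexp_rod[OF K.K3] by (simp add: K_def \<alpha>_def)
  have E: "mprod Rt n = rod K \<gamma>"
    using assms(5) mexp_rod[OF K.K3] by (simp add: cycle_err_def K_def)
  define Rs where "Rs = (\<lambda>i. transpose (mprod Rt (i - 1)) ** mpow (rod K \<alpha>) (i - 1))"
  have Rs_eq: "Rs i = transpose (mprod Rt (i - 1)) ** rod K (real (i - 1) * \<alpha>)" for i
    by (simp add: Rs_def K.mpow_rod K_def)
  have RsS: "\<forall>i\<in>{1..n}. Rs i \<in> SO3"
  proof
    fix i assume i: "i \<in> {1..n}"
    have "mprod Rt (i - 1) \<in> SO3" using i by (intro mprod_SO3[OF Rt]) auto
    then show "Rs i \<in> SO3" unfolding Rs_eq
      by (intro SO3_mul SO3_tr) (simp_all add: K.rod_SO3 K_def)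
  qed
  have Qs: "transpose (Rs i) ** Rt i ** Rs (nx n i) = rod K \<alpha>" if i: "i \<in> {1..n}" for i
  proof -
    obtain j where j: "i = Suc j" using i by (cases i) auto
    have tRs: "transpose (Rs i) = rod K (- (real j * \<alpha>)) ** mprod Rt j"
      unfolding Rs_eq j by (simp add: matrix_transpose_mul K.rod_tr[folded K_def])
    have P: "mprod Rt j ** Rt i = mprod Rt i" by (simp add: j)
    have "transpose (Rs i) ** Rt i = rod K (- (real j * \<alpha>)) ** mprod Rt i"
      unfolding tRs P[symmetric] by (simp add: matrix_mul_assoc)
    show ?thesis
    proof (cases "i = n")
      case True
      have "Rs (nx n i) = mat 1" using True by (simp add: nx_def Rs_eq K.rod_0[folded K_def])
      then have "transpose (Rs i) ** Rt i ** Rs (nx n i) = rod K (- (real j * \<alpha>)) ** rod K \<gamma>"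
        using \<open>transpose (Rs i) ** Rt i = _\<close> True E by simp
      also have "\<dots> = rod K \<alpha>"
      proof -
        have rn: "real n = real j + 1" using True j by simp
        have "- (real j * \<alpha>) + \<gamma> = \<alpha>" using npos unfolding \<alpha>_def rn by (simp add: field_simps)
        then show ?thesis by (simp add: K.rod_add[folded K_def])
      qed
      finally show ?thesis .
    next
      case False
      then have inx: "nx n i = Suc i" by (simp add: nx_def)
      have PS: "mprod Rt i ** transpose (mprod Rt i) = mat 1"
        using i by (intro SO3_AT mprod_SO3[OF Rt]) auto
      have "transpose (Rs i) ** Rt i ** Rs (nx n i) = rod K (- (real j * \<alpha>)) ** mprod Rt i ** Rs (Suc i)"
        using \<open>transpose (Rs i) ** Rt i = _\<close> inx by simp
      also have "\<dots> = rod K (- (real j * \<alpha>)) ** mprod Rt i ** transpose (mprod Rt i) ** rod K (real i * \<alpha>)"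
        unfolding Rs_eq[of "Suc i"] by (simp add: matrix_mul_assoc)
      also have "\<dots> = rod K (- (real j * \<alpha>)) ** rod K (real i * \<alpha>)" by (simp add: mul_cancel_r[OF PS])
      also have "\<dots> = rod K \<alpha>"
      proof -
        have "- (real j * \<alpha>) + real i * \<alpha> = \<alpha>" using j by (simp add: algebra_simps)
        then show ?thesis by (simp add: K.rod_add[folded K_def])
      qed
      finally show ?thesis .
    qed
  qed
  have cost_s: "cost n Rt Rs = - (3 * real n + 2 * (real n * (1 + 2 * cos \<alpha>)))"
  proof -
    have "(\<Sum>i=1..n. trace (transpose (Rs i) ** Rt i ** Rs (nx n i))) = (\<Sum>i=1..n. trace (rod K \<alpha>))"
      by (intro sum.cong) (simp_all add: Qs)
    also have "\<dots> = real n * (1 + 2 * cos \<alpha>)" by (simp add: K.rod_trace[folded K_def])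
    finally show ?thesis by (simp add: cost_formula[OF n3 RsS])
  qed
  have "cost n Rt Rs \<le> cost n Rt R" if R: "\<forall>i\<in>{1..n}. R i \<in> SO3" for R
  proof -
    have "trace (mprod Rt n) = 1 + 2 * cos \<gamma>" by (simp add: E K.rod_trace[folded K_def])
    from upper_bound[OF n3 Rt R assms(4) this]
    show ?thesis by (simp add: cost_formula[OF n3 R] cost_s \<alpha>_def)
  qed
  then show ?thesis unfolding Let_def E0 using RsS by (simp add: Rs_def)
qed
end
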